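(* Let $\alpha\in\mathbb{N}$ and consider the generalized Good–Turing estimator $M^{\mathrm{GT}}_{0,\alpha}(X^n)=\phi_\alpha(X^n)/\binom{n}{\alpha}$. Its worst-case squared-error risk $$R_{n,\alpha}(M^{\mathrm{GT}}_{0,\alpha})=\sup_P E_{X^n\sim P}\big[(M^{\mathrm{GT}}_{0,\alpha}(X^n)-M_{0,\alpha}(X^n,P))^2\big],$$ with the supremum over all discrete distributions $P$, satisfies $$R_{n,\alpha}(M^{\mathrm{GT}}_{0,\alpha})\le O\big(1/n^{2\alpha-1}\big)+o\big(1/n^{2\alpha-1}\big)\quad\text{as } n\to\infty.$$
   Context: $P$ is a discrete probability distribution on a countable alphabet $\mathcal{X}$, $p_x=P(x)$, and $X^n=(X_1,\ldots,X_n)$ are i.i.d. samples from $P$. $F_x(X^n)=\sum_{i=1}^n I(X_i=x)$ is the number of occurrences of $x$ in $X^n$, $I(\cdot)$ is the indicator, $\phi_l(X^n)=\sum_{x\in\mathcal{X}}I(F_x(X^n)=l)$ is the number of letters appearing exactly $l$ times, and $M_{0,\alpha}(X^n,P)=\sum_{x\in\mathcal{X}}p_x^{\alpha}I(F_x(X^n)=0)$ is the order-$\alpha$ missing mass. *)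

theory Defs
  imports "HOL-Probability.Probability"
begin

text \<open>An i.i.d. sample X^n = (X_1,...,X_n) from P, encoded as a function on
  indices {0..<n} (value undefined outside).\<close>
definition sample_pmf :: "'a pmf \<Rightarrow> nat \<Rightarrow> (nat \<Rightarrow> 'a) pmf" where
  "sample_pmf P n = Pi_pmf {..<n} undefined (\<lambda>_. P)"

definition occ :: "nat \<Rightarrow> (nat \<Rightarrow> 'a) \<Rightarrow> 'a \<Rightarrow> nat" where
  "occ n xs x = card {i \<in> {..<n}. xs i = x}"

definition prevalence :: "nat \<Rightarrow> (nat \<Rightarrow> 'a) \<Rightarrow> nat \<Rightarrow> nat" where
  "prevalence n xs l = card {x. occ n xs x = l}"

definition missing_mass :: "nat \<Rightarrow> nat \<Rightarrow> (nat \<Rightarrow> 'a) \<Rightarrow> 'a pmf \<Rightarrow> real" where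
  "missing_mass \<alpha> n xs P = (\<Sum>\<^sub>\<infinity>x. pmf P x ^ \<alpha> * (if occ n xs x = 0 then 1 else 0))"

definition GT_est :: "nat \<Rightarrow> nat \<Rightarrow> (nat \<Rightarrow> 'a) \<Rightarrow> real" where
  "GT_est \<alpha> n xs = real (prevalence n xs \<alpha>) / real (n choose \<alpha>)"

text \<open>Worst-case squared-error risk (sup over all discrete distributions on 'a),
  valued in the extended non-negative reals so the supremum is always meaningful.\<close>
definition GT_risk :: "'a itself \<Rightarrow> nat \<Rightarrow> nat \<Rightarrow> ennreal" where
  "GT_risk _ \<alpha> n = (SUP P::'a pmf. \<integral>\<^sup>+ xs. ennreal ((GT_est \<alpha> n xs - missing_mass \<alpha> n xs P)\<^sup>2)
        \<partial>measure_pmf (sample_pmf P n))"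

end

theory Submission
  imports Defs
begin



lemma pow_exp_bound:
  fixes t :: real and j m :: nat
  assumes "0 \<le> t" "t \<le> 1" "m > 0"
  shows "t ^ j * (1 - t) ^ m \<le> real j ^ j / real m ^ j"
proof (cases "j = 0")
  case True
  then show ?thesis using assms by (simp add: power_le_one)
next
  case False
  have e1: "(1 - t) ^ m \<le> exp (- t) ^ m"
    using assms by (intro power_mono) (auto simp: exp_ge_add_one_self[of "-t", simplified])
  have "exp (- t) ^ m = exp (- t * m)" by (simp add: exp_of_nat_mult[symmetric] mult.commute)
  also have "\<dots> = exp (- t * m / j) ^ j" using False by (simp add: exp_of_nat_mult[symmetric])
  finally have e2: "(1 - t) ^ m \<le> exp (- t * m / j) ^ j" using e1 by simp
  define u where "u = t * m / j"
  have u0: "u \<ge> 0" using assms by (simp add: u_def)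
  have "u \<le> exp u" using exp_ge_add_one_self[of u] by linarith
  hence "u * exp (- u) \<le> 1" by (simp add: exp_minus field_simps)
  have tt: "t = (j / m) * u" using False assms by (simp add: u_def field_simps)
  have mu: "- t * m / j = - u" by (simp add: u_def)
  have "t * exp (- t * m / j) = (j / m) * (u * exp (- u))"
    unfolding mu by (subst tt) simp
  also have "\<dots> \<le> j / m" using \<open>u * exp (- u) \<le> 1\<close> u0
    by (intro mult_left_le) auto
  finally have e3: "t * exp (- t * m / j) \<le> j / m" .
  have "t ^ j * (1 - t) ^ m \<le> t ^ j * exp (- t * m / j) ^ j"
    using e2 assms by (intro mult_left_mono) auto
  also have "\<dots> = (t * exp (- t * m / j)) ^ j" by (simp add: power_mult_distrib)
  also have "\<dots> \<le> (j / m) ^ j" using e3 assms by (intro power_mono) auto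
  finally show ?thesis by (simp add: power_divide)
qed

lemma pow_exp_bound2:
  fixes t :: real and j m n :: nat
  assumes "0 \<le> t" "t \<le> 1" "n > 0" "n \<le> 2 * m"
  shows "t ^ j * (1 - t) ^ m \<le> (2 * real j) ^ j / real n ^ j"
proof -
  have m0: "m > 0" using assms by auto
  have "t ^ j * (1 - t) ^ m \<le> real j ^ j / real m ^ j" by (rule pow_exp_bound) (use assms m0 in auto)
  also have "\<dots> \<le> (2 * real j) ^ j / real n ^ j"
  proof -
    have "real n ^ j \<le> (2 * real m) ^ j" using assms by (intro power_mono) auto
    hence "real j ^ j * real n ^ j \<le> real j ^ j * (2 ^ j * real m ^ j)"
      by (intro mult_left_mono) (auto simp: power_mult_distrib)
    thus ?thesis using m0 assms by (simp add: field_simps power_mult_distrib)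
  qed
  finally show ?thesis .
qed




definition Ieq :: "nat \<Rightarrow> nat \<Rightarrow> (nat \<Rightarrow> 'a) \<Rightarrow> 'a \<Rightarrow> ennreal" where
  "Ieq \<alpha> n xs x = (if occ n xs x = \<alpha> then 1 else 0)"

definition I0 :: "nat \<Rightarrow> (nat \<Rightarrow> 'a) \<Rightarrow> 'a \<Rightarrow> ennreal" where
  "I0 n xs x = (if occ n xs x = 0 then 1 else 0)"

definition Sub :: "nat \<Rightarrow> nat \<Rightarrow> nat set set" where
  "Sub n \<alpha> = {S. S \<subseteq> {..<n} \<and> card S = \<alpha>}"

lemma finite_Sub: "finite (Sub n \<alpha>)"
  unfolding Sub_def by (rule finite_subset[of _ "Pow {..<n}"]) auto

lemma card_Sub: "card (Sub n \<alpha>) = n choose \<alpha>"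
  unfolding Sub_def using n_subsets[of "{..<n}" \<alpha>] by simp

lemma pat_eq:
  fixes n :: nat and xs :: "nat \<Rightarrow> 'a"
  assumes "S \<subseteq> {..<n}"
  shows "(\<Prod>i<n. indicator (if i \<in> S then {x} else -{x}) (xs i) :: ennreal)
         = (if {i \<in> {..<n}. xs i = x} = S then 1 else 0)"
proof (cases "{i \<in> {..<n}. xs i = x} = S")
  case True
  then show ?thesis by (intro trans[OF prod.neutral]) (auto simp: indicator_def)
next
  case False
  then obtain i where i: "i < n" "(xs i = x) \<noteq> (i \<in> S)" using assms by auto
  have z: "indicator (if i \<in> S then {x} else -{x}) (xs i) = (0::ennreal)"
    using i by (auto simp: indicator_def)
  have "(\<Prod>i<n. indicator (if i \<in> S then {x} else -{x}) (xs i) :: ennreal) = 0"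
    using i(1) z by (simp add: prod.remove[of "{..<n}" i])
  then show ?thesis using False by simp
qed

lemma Ieq_sum:
  "Ieq \<alpha> n xs x = (\<Sum>S\<in>Sub n \<alpha>. \<Prod>i<n. indicator (if i \<in> S then {x} else -{x}) (xs i))"
proof -
  have "(\<Sum>S\<in>Sub n \<alpha>. \<Prod>i<n. indicator (if i \<in> S then {x} else -{x}) (xs i) :: ennreal)
      = (\<Sum>S\<in>Sub n \<alpha>. if {i \<in> {..<n}. xs i = x} = S then 1 else 0)"
    by (intro sum.cong refl pat_eq) (auto simp: Sub_def)
  also have "\<dots> = (if {i \<in> {..<n}. xs i = x} \<in> Sub n \<alpha> then 1 else 0)"
    using finite_Sub by simp
  also have "\<dots> = Ieq \<alpha> n xs x"
    by (auto simp: Ieq_def Sub_def occ_def)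
  finally show ?thesis by simp
qed

lemma I0_prod: "I0 n xs y = (\<Prod>i<n. indicator (-{y}) (xs i))"
proof -
  have "(\<Prod>i<n. indicator (-{y}) (xs i) :: ennreal) = (\<Prod>i<n. indicator (if i \<in> {} then {y} else -{y}) (xs i))"
    by simp
  also have "\<dots> = (if {i \<in> {..<n}. xs i = y} = {} then 1 else 0)" by (rule pat_eq) auto
  also have "\<dots> = I0 n xs y" by (auto simp: I0_def occ_def)
  finally show ?thesis by simp
qed

lemma E_prod:
  "(\<integral>\<^sup>+xs. (\<Prod>i<n. indicator (G i) (xs i)) \<partial>measure_pmf (sample_pmf P n))
     = ennreal (\<Prod>i<n. measure_pmf.prob P (G i))"
proof -
  have "(\<integral>\<^sup>+xs. (\<Prod>i<n. indicator (G i) (xs i)) \<partial>measure_pmf (sample_pmf P n))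
     = (\<Prod>i<n. \<integral>\<^sup>+z. indicator (G i) z \<partial>measure_pmf P)"
    unfolding sample_pmf_def
    using nn_integral_prod_Pi_pmf[of "{..<n}" undefined "\<lambda>_. P" "\<lambda>i. indicator (G i)"] by simp
  also have "\<dots> = (\<Prod>i<n. ennreal (measure_pmf.prob P (G i)))"
    by (simp add: measure_pmf.emeasure_eq_measure)
  also have "\<dots> = ennreal (\<Prod>i<n. measure_pmf.prob P (G i))"
    by (simp add: prod_ennreal)
  finally show ?thesis .
qed

lemma prod_if_pow:
  fixes u v :: "'b::comm_monoid_mult" and n :: nat
  assumes "S \<subseteq> {..<n}"
  shows "(\<Prod>i<n. if i \<in> S then u else v) = u ^ card S * v ^ (n - card S)"
proof -
  have "(\<Prod>i<n. if i \<in> S then u else v) = (\<Prod>i\<in>{..<n} \<inter> {i. i \<in> S}. u) * (\<Prod>i\<in>{..<n} \<inter> - {i. i \<in> S}. v)"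
    by (rule prod.If_cases) simp
  also have "{..<n} \<inter> {i. i \<in> S} = S" using assms by auto
  also have "{..<n} \<inter> - {i. i \<in> S} = {..<n} - S" by auto
  finally have eq: "(\<Prod>i<n. if i \<in> S then u else v) = (\<Prod>i\<in>S. u) * (\<Prod>i\<in>{..<n} - S. v)" .
  have "card ({..<n} - S) = n - card S"
    using assms by (simp add: card_Diff_subset finite_subset)
  then show ?thesis unfolding eq by simp
qed

lemma E_sub:
  "(\<integral>\<^sup>+xs. (\<Sum>S\<in>Sub n \<alpha>. \<Prod>i<n. indicator (if i \<in> S then U else V) (xs i)) \<partial>measure_pmf (sample_pmf P n))
   = ennreal (real (n choose \<alpha>) * measure_pmf.prob P U ^ \<alpha> * measure_pmf.prob P V ^ (n - \<alpha>))"
proof -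
  have "(\<integral>\<^sup>+xs. (\<Sum>S\<in>Sub n \<alpha>. \<Prod>i<n. indicator (if i \<in> S then U else V) (xs i)) \<partial>measure_pmf (sample_pmf P n))
     = (\<Sum>S\<in>Sub n \<alpha>. \<integral>\<^sup>+xs. (\<Prod>i<n. indicator (if i \<in> S then U else V) (xs i)) \<partial>measure_pmf (sample_pmf P n))"
    by (rule nn_integral_sum) simp
  also have "\<dots> = (\<Sum>S\<in>Sub n \<alpha>. ennreal (measure_pmf.prob P U ^ \<alpha> * measure_pmf.prob P V ^ (n - \<alpha>)))"
  proof (intro sum.cong refl)
    fix S assume S: "S \<in> Sub n \<alpha>"
    have "(\<Prod>i<n. measure_pmf.prob P (if i \<in> S then U else V))
        = (\<Prod>i<n. if i \<in> S then measure_pmf.prob P U else measure_pmf.prob P V)"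
      by (intro prod.cong) auto
    also have "\<dots> = measure_pmf.prob P U ^ \<alpha> * measure_pmf.prob P V ^ (n - \<alpha>)"
      using S by (subst prod_if_pow) (auto simp: Sub_def)
    finally show "(\<integral>\<^sup>+xs. (\<Prod>i<n. indicator (if i \<in> S then U else V) (xs i)) \<partial>measure_pmf (sample_pmf P n))
        = ennreal (measure_pmf.prob P U ^ \<alpha> * measure_pmf.prob P V ^ (n - \<alpha>))"
      by (simp add: E_prod)
  qed
  also have "\<dots> = ennreal (real (n choose \<alpha>) * (measure_pmf.prob P U ^ \<alpha> * measure_pmf.prob P V ^ (n - \<alpha>)))"
    by (simp add: card_Sub ennreal_mult' ennreal_of_nat_eq_real_of_nat)
  finally show ?thesis by (simp add: mult.assoc)
qed




abbreviation "G S x i \<equiv> (if i \<in> S then {x} else -{x})"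

lemma prob_compl_single: "measure_pmf.prob P (-{x}) = 1 - pmf P x"
  using measure_pmf.prob_compl[of "{x}" P] by (simp add: Compl_eq_Diff_UNIV measure_pmf_single)

lemma prob_two:
  assumes "x \<noteq> y"
  shows "measure_pmf.prob P (-{x} \<inter> -{y}) = 1 - pmf P x - pmf P y"
proof -
  have "-{x} \<inter> -{y} = UNIV - {x, y}" by auto
  moreover have "measure_pmf.prob P {x, y} = pmf P x + pmf P y"
    using assms by (simp add: measure_measure_pmf_finite)
  ultimately show ?thesis using measure_pmf.prob_compl[of "{x,y}" P] by simp
qed

lemma E_Ieq:
  "(\<integral>\<^sup>+xs. Ieq \<alpha> n xs x \<partial>measure_pmf (sample_pmf P n))
   = ennreal (real (n choose \<alpha>) * pmf P x ^ \<alpha> * (1 - pmf P x) ^ (n - \<alpha>))"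
  unfolding Ieq_sum E_sub by (simp add: measure_pmf_single prob_compl_single)

lemma Ieq_I0_eq:
  "Ieq \<alpha> n xs x * I0 n xs y =
   (\<Sum>S\<in>Sub n \<alpha>. \<Prod>i<n. indicator (if i \<in> S then {x} \<inter> -{y} else -{x} \<inter> -{y}) (xs i))"
  unfolding Ieq_sum I0_prod sum_distrib_right prod.distrib[symmetric]
  by (intro sum.cong prod.cong refl) (auto simp: indicator_def)

lemma E_Ieq_I0:
  assumes "x \<noteq> y"
  shows "(\<integral>\<^sup>+xs. Ieq \<alpha> n xs x * I0 n xs y \<partial>measure_pmf (sample_pmf P n))
   = ennreal (real (n choose \<alpha>) * pmf P x ^ \<alpha> * measure_pmf.prob P (-{x} \<inter> -{y}) ^ (n - \<alpha>))"
proof -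
  have "{x} \<inter> -{y} = {x}" using assms by auto
  then show ?thesis unfolding Ieq_I0_eq E_sub by (simp add: measure_pmf_single)
qed

lemma E_I0_I0:
  "(\<integral>\<^sup>+xs. I0 n xs x * I0 n xs y \<partial>measure_pmf (sample_pmf P n))
   = ennreal (measure_pmf.prob P (-{x} \<inter> -{y}) ^ n)"
proof -
  have "(\<lambda>xs. I0 n xs x * I0 n xs y) = (\<lambda>xs. \<Prod>i<n. indicator (-{x} \<inter> -{y}) (xs i))"
    unfolding I0_prod prod.distrib[symmetric] by (intro ext prod.cong) (auto simp: indicator_def)
  then show ?thesis by (simp add: E_prod)
qed

lemma term_bound:
  assumes "x \<noteq> y" "S \<in> Sub n \<alpha>" "T \<in> Sub n \<alpha>" "2 * \<alpha> \<le> n"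
  shows "(\<Prod>i<n. measure_pmf.prob P (G S x i \<inter> G T y i))
     \<le> pmf P x ^ \<alpha> * pmf P y ^ \<alpha> * measure_pmf.prob P (-{x} \<inter> -{y}) ^ (n - 2 * \<alpha>)"
proof (cases "S \<inter> T = {}")
  case False
  then obtain i where i: "i \<in> S" "i \<in> T" by auto
  have "i < n" using i assms by (auto simp: Sub_def)
  have "measure_pmf.prob P (G S x i \<inter> G T y i) = 0" using i assms(1) by auto
  then have z: "(\<Prod>i<n. measure_pmf.prob P (G S x i \<inter> G T y i)) = 0"
    using \<open>i < n\<close> by (simp add: prod.remove[of "{..<n}" i])
  have "0 \<le> pmf P x ^ \<alpha> * pmf P y ^ \<alpha> * measure_pmf.prob P (-{x} \<inter> -{y}) ^ (n - 2 * \<alpha>)"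
    by simp
  then show ?thesis unfolding z .
next
  case True
  have SS: "S \<subseteq> {..<n}" "card S = \<alpha>" "T \<subseteq> {..<n}" "card T = \<alpha>" using assms by (auto simp: Sub_def)
  have fin: "finite S" "finite T" using SS finite_subset by auto
  define r where "r = measure_pmf.prob P (-{x} \<inter> -{y})"
  have eq: "measure_pmf.prob P (G S x i \<inter> G T y i)
      = (if i \<in> S then pmf P x else 1) * (if i \<in> T then pmf P y else 1) * (if i \<in> S \<union> T then 1 else r)" for i
  proof -
    have "{x} \<inter> -{y} = {x}" "-{x} \<inter> {y} = {y}" using assms(1) by auto
    then show ?thesis using True by (auto simp: r_def measure_pmf_single)
  qed
  have cu: "card (S \<union> T) = 2 * \<alpha>" using True fin SS by (simp add: card_Un_disjoint)
  have "(\<Prod>i<n. measure_pmf.prob P (G S x i \<inter> G T y i))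
      = (\<Prod>i<n. if i \<in> S then pmf P x else 1) * (\<Prod>i<n. if i \<in> T then pmf P y else 1)
        * (\<Prod>i<n. if i \<in> S \<union> T then 1 else r)"
    unfolding eq prod.distrib by simp
  also have "\<dots> = pmf P x ^ \<alpha> * pmf P y ^ \<alpha> * r ^ (n - 2 * \<alpha>)"
  proof -
    have "(\<Prod>i<n. if i \<in> S \<union> T then 1 else r) = (1::real) ^ card (S \<union> T) * r ^ (n - card (S \<union> T))"
      by (rule prod_if_pow) (use SS in auto)
    then show ?thesis using SS cu by (simp add: prod_if_pow del: Un_iff)
  qed
  finally show ?thesis by (simp add: r_def)
qed

lemma E_Ieq_Ieq:
  assumes "x \<noteq> y" "2 * \<alpha> \<le> n"
  shows "(\<integral>\<^sup>+xs. Ieq \<alpha> n xs x * Ieq \<alpha> n xs y \<partial>measure_pmf (sample_pmf P n))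
   \<le> ennreal (real (n choose \<alpha>) ^ 2 * (pmf P x ^ \<alpha> * pmf P y ^ \<alpha> * measure_pmf.prob P (-{x} \<inter> -{y}) ^ (n - 2 * \<alpha>)))"
proof -
  define B where "B = pmf P x ^ \<alpha> * pmf P y ^ \<alpha> * measure_pmf.prob P (-{x} \<inter> -{y}) ^ (n - 2 * \<alpha>)"
  have "(\<lambda>xs. Ieq \<alpha> n xs x * Ieq \<alpha> n xs y) =
     (\<lambda>xs. \<Sum>S\<in>Sub n \<alpha>. \<Sum>T\<in>Sub n \<alpha>. \<Prod>i<n. indicator (G S x i \<inter> G T y i) (xs i))"
    unfolding Ieq_sum sum_product prod.distrib[symmetric]
    by (intro ext sum.cong prod.cong refl) (auto simp: indicator_def)
  then have "(\<integral>\<^sup>+xs. Ieq \<alpha> n xs x * Ieq \<alpha> n xs y \<partial>measure_pmf (sample_pmf P n))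
     = (\<Sum>S\<in>Sub n \<alpha>. \<Sum>T\<in>Sub n \<alpha>. ennreal (\<Prod>i<n. measure_pmf.prob P (G S x i \<inter> G T y i)))"
    by (simp add: nn_integral_sum E_prod)
  also have "\<dots> \<le> (\<Sum>S\<in>Sub n \<alpha>. \<Sum>T\<in>Sub n \<alpha>. ennreal B)"
    unfolding B_def using assms
    by (intro sum_mono ennreal_leI term_bound) auto
  also have "\<dots> = ennreal (real (n choose \<alpha>) ^ 2 * B)"
    by (simp add: card_Sub ennreal_mult' ennreal_of_nat_eq_real_of_nat power2_eq_square mult.assoc)
  finally show ?thesis by (simp add: B_def)
qed




lemma key_ineq:
  fixes p q :: real and m \<alpha> :: nat
  assumes "0 \<le> p" "0 \<le> q" "p + q \<le> 1"
  shows "p ^ \<alpha> * q ^ \<alpha> * (1 - p - q) ^ m + p ^ \<alpha> * q ^ \<alpha> * (1 - p - q) ^ (m + 2 * \<alpha>)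
     \<le> 2 * (p ^ \<alpha> * q ^ \<alpha> * (1 - p - q) ^ (m + \<alpha>))
        + \<alpha>\<^sup>2 * p ^ \<alpha> * q ^ \<alpha> * (p + q)\<^sup>2 * (1 - p) ^ m * (1 - q) ^ m"
proof -
  define r where "r = 1 - p - q"
  define w where "w = p ^ \<alpha> * q ^ \<alpha>"
  have r0: "0 \<le> r" "r \<le> 1" using assms by (auto simp: r_def)
  have w0: "0 \<le> w" using assms by (simp add: w_def)
  have bern: "1 + real \<alpha> * (r - 1) \<le> r ^ \<alpha>"
    using Bernoulli_inequality[of "r - 1" \<alpha>] r0 by simp
  have a0: "0 \<le> 1 - r ^ \<alpha>" using r0 by (simp add: power_le_one)
  have a1: "1 - r ^ \<alpha> \<le> \<alpha> * (p + q)" using bern by (simp add: r_def algebra_simps)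
  have sq: "(1 - r ^ \<alpha>)\<^sup>2 \<le> (\<alpha> * (p + q))\<^sup>2"
    using a0 a1 by (intro power_mono) auto
  have rm: "r ^ m \<le> ((1 - p) * (1 - q)) ^ m"
    using r0 assms by (intro power_mono) (auto simp: r_def algebra_simps)
  have pq0: "0 \<le> (1 - p) * (1 - q)" using assms by (intro mult_nonneg_nonneg) auto
  have "r ^ m * (1 - r ^ \<alpha>)\<^sup>2 \<le> ((1 - p) * (1 - q)) ^ m * (\<alpha> * (p + q))\<^sup>2"
    using sq rm r0 pq0 by (intro mult_mono) auto
  hence "w * (r ^ m * (1 - r ^ \<alpha>)\<^sup>2) \<le> w * (((1 - p) * (1 - q)) ^ m * (\<alpha> * (p + q))\<^sup>2)"
    using w0 by (intro mult_left_mono) auto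
  moreover have "w * (r ^ m * (1 - r ^ \<alpha>)\<^sup>2) = w * r ^ m + w * r ^ (m + 2 * \<alpha>) - 2 * (w * r ^ (m + \<alpha>))"
  proof -
    have e1: "r ^ (m + \<alpha>) = r ^ m * r ^ \<alpha>" by (simp add: power_add)
    have e2: "r ^ (m + 2 * \<alpha>) = r ^ m * (r ^ \<alpha> * r ^ \<alpha>)" by (simp add: power_add mult_2)
    show ?thesis unfolding e1 e2 by (simp add: power2_eq_square algebra_simps)
  qed
  moreover have "w * (((1 - p) * (1 - q)) ^ m * (\<alpha> * (p + q))\<^sup>2)
      = \<alpha>\<^sup>2 * p ^ \<alpha> * q ^ \<alpha> * (p + q)\<^sup>2 * (1 - p) ^ m * (1 - q) ^ m"
    by (simp add: w_def power_mult_distrib mult_ac)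
  ultimately show ?thesis
    unfolding r_def[symmetric] w_def[symmetric] by linarith
qed




definition kr :: "nat \<Rightarrow> nat \<Rightarrow> 'a pmf \<Rightarrow> 'a \<Rightarrow> 'a \<Rightarrow> real" where
  "kr \<alpha> n P x y = (if x = y then pmf P x ^ \<alpha> * (1 - pmf P x) ^ (n - \<alpha>) / real (n choose \<alpha>)
        + pmf P x ^ (2 * \<alpha>) * (1 - pmf P x) ^ n else 0)
     + real \<alpha> ^ 2 * pmf P x ^ \<alpha> * pmf P y ^ \<alpha> * (pmf P x + pmf P y)\<^sup>2
        * (1 - pmf P x) ^ (n - 2 * \<alpha>) * (1 - pmf P y) ^ (n - 2 * \<alpha>)"

lemma kr_nonneg: "0 \<le> kr \<alpha> n P x y"
  unfolding kr_def by (intro add_nonneg_nonneg mult_nonneg_nonneg) (auto simp: pmf_le_1)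

lemma em: "0 \<le> a \<Longrightarrow> ennreal a * ennreal b = ennreal (a * b)"
  by (simp add: ennreal_mult')

lemma Ieq_sq: "Ieq \<alpha> n xs x * Ieq \<alpha> n xs x = Ieq \<alpha> n xs x"
  by (simp add: Ieq_def)

lemma pairwise:
  fixes P :: "'a pmf"
  assumes "\<alpha> \<ge> 1" "2 * \<alpha> \<le> n"
  defines "C \<equiv> real (n choose \<alpha>)"
  defines "M \<equiv> measure_pmf (sample_pmf P n)"
  shows "(\<integral>\<^sup>+xs. (ennreal (1/C) * Ieq \<alpha> n xs x) * (ennreal (1/C) * Ieq \<alpha> n xs y)
            + (ennreal (pmf P x ^ \<alpha>) * I0 n xs x) * (ennreal (pmf P y ^ \<alpha>) * I0 n xs y) \<partial>M)
     \<le> (\<integral>\<^sup>+xs. (ennreal (1/C) * Ieq \<alpha> n xs x) * (ennreal (pmf P y ^ \<alpha>) * I0 n xs y)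
            + (ennreal (pmf P x ^ \<alpha>) * I0 n xs x) * (ennreal (1/C) * Ieq \<alpha> n xs y) \<partial>M)
        + ennreal (kr \<alpha> n P x y)"
proof -
  define p where "p = pmf P x"
  define q where "q = pmf P y"
  have C0: "C > 0" using assms by (simp add: C_def)
  have p0: "0 \<le> p" "p \<le> 1" "0 \<le> q" "q \<le> 1" by (auto simp: p_def q_def pmf_le_1)
  have L: "(\<integral>\<^sup>+xs. (ennreal (1/C) * Ieq \<alpha> n xs x) * (ennreal (1/C) * Ieq \<alpha> n xs y)
            + (ennreal (pmf P x ^ \<alpha>) * I0 n xs x) * (ennreal (pmf P y ^ \<alpha>) * I0 n xs y) \<partial>M)
      = ennreal (1/C * (1/C)) * (\<integral>\<^sup>+xs. Ieq \<alpha> n xs x * Ieq \<alpha> n xs y \<partial>M)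
        + ennreal (p ^ \<alpha> * q ^ \<alpha>) * (\<integral>\<^sup>+xs. I0 n xs x * I0 n xs y \<partial>M)"
  proof -
    have "(\<integral>\<^sup>+xs. (ennreal (1/C) * Ieq \<alpha> n xs x) * (ennreal (1/C) * Ieq \<alpha> n xs y)
            + (ennreal (pmf P x ^ \<alpha>) * I0 n xs x) * (ennreal (pmf P y ^ \<alpha>) * I0 n xs y) \<partial>M)
       = (\<integral>\<^sup>+xs. ennreal (1/C * (1/C)) * (Ieq \<alpha> n xs x * Ieq \<alpha> n xs y)
            + ennreal (p ^ \<alpha> * q ^ \<alpha>) * (I0 n xs x * I0 n xs y) \<partial>M)"
    proof -
      have e1: "ennreal (1/C * (1/C)) = ennreal (1/C) * ennreal (1/C)" using C0 by (intro ennreal_mult') simp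
      have e2: "ennreal (p ^ \<alpha> * q ^ \<alpha>) = ennreal (pmf P x ^ \<alpha>) * ennreal (pmf P y ^ \<alpha>)"
        using p0 by (simp add: ennreal_mult' p_def q_def)
      show ?thesis unfolding e1 e2 by (intro nn_integral_cong) (simp only: mult_ac)
    qed
    also have "\<dots> = ennreal (1/C * (1/C)) * (\<integral>\<^sup>+xs. Ieq \<alpha> n xs x * Ieq \<alpha> n xs y \<partial>M)
        + ennreal (p ^ \<alpha> * q ^ \<alpha>) * (\<integral>\<^sup>+xs. I0 n xs x * I0 n xs y \<partial>M)"
      by (simp add: nn_integral_add nn_integral_cmult M_def)
    finally show ?thesis .
  qed
  have R: "(\<integral>\<^sup>+xs. (ennreal (1/C) * Ieq \<alpha> n xs x) * (ennreal (pmf P y ^ \<alpha>) * I0 n xs y)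
            + (ennreal (pmf P x ^ \<alpha>) * I0 n xs x) * (ennreal (1/C) * Ieq \<alpha> n xs y) \<partial>M)
      = ennreal (1/C * q ^ \<alpha>) * (\<integral>\<^sup>+xs. Ieq \<alpha> n xs x * I0 n xs y \<partial>M)
        + ennreal (1/C * p ^ \<alpha>) * (\<integral>\<^sup>+xs. Ieq \<alpha> n xs y * I0 n xs x \<partial>M)"
  proof -
    have "(\<integral>\<^sup>+xs. (ennreal (1/C) * Ieq \<alpha> n xs x) * (ennreal (pmf P y ^ \<alpha>) * I0 n xs y)
            + (ennreal (pmf P x ^ \<alpha>) * I0 n xs x) * (ennreal (1/C) * Ieq \<alpha> n xs y) \<partial>M)
       = (\<integral>\<^sup>+xs. ennreal (1/C * q ^ \<alpha>) * (Ieq \<alpha> n xs x * I0 n xs y)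
            + ennreal (1/C * p ^ \<alpha>) * (Ieq \<alpha> n xs y * I0 n xs x) \<partial>M)"
    proof -
      have e1: "ennreal (1/C * q ^ \<alpha>) = ennreal (1/C) * ennreal (pmf P y ^ \<alpha>)" using C0 unfolding q_def by (intro ennreal_mult') simp
      have e2: "ennreal (1/C * p ^ \<alpha>) = ennreal (1/C) * ennreal (pmf P x ^ \<alpha>)" using C0 unfolding p_def by (intro ennreal_mult') simp
      show ?thesis unfolding e1 e2 by (intro nn_integral_cong) (simp only: mult_ac)
    qed
    also have "\<dots> = ennreal (1/C * q ^ \<alpha>) * (\<integral>\<^sup>+xs. Ieq \<alpha> n xs x * I0 n xs y \<partial>M)
        + ennreal (1/C * p ^ \<alpha>) * (\<integral>\<^sup>+xs. Ieq \<alpha> n xs y * I0 n xs x \<partial>M)"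
      by (simp add: nn_integral_add nn_integral_cmult M_def)
    finally show ?thesis .
  qed
  show ?thesis
  proof (cases "x = y")
    case True
    have f1: "(\<integral>\<^sup>+xs. Ieq \<alpha> n xs x * Ieq \<alpha> n xs y \<partial>M) = ennreal (C * p ^ \<alpha> * (1 - p) ^ (n - \<alpha>))"
      using True by (simp add: Ieq_sq M_def E_Ieq C_def p_def)
    have f2: "(\<integral>\<^sup>+xs. I0 n xs x * I0 n xs y \<partial>M) = ennreal ((1 - p) ^ n)"
      using True by (simp add: M_def E_I0_I0 p_def prob_compl_single)
    have "(\<integral>\<^sup>+xs. (ennreal (1/C) * Ieq \<alpha> n xs x) * (ennreal (1/C) * Ieq \<alpha> n xs y)
            + (ennreal (pmf P x ^ \<alpha>) * I0 n xs x) * (ennreal (pmf P y ^ \<alpha>) * I0 n xs y) \<partial>M)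
        = ennreal (1/C * (1/C) * (C * p ^ \<alpha> * (1 - p) ^ (n - \<alpha>))) + ennreal (p ^ \<alpha> * q ^ \<alpha> * (1 - p) ^ n)"
    proof -
      have n1: "0 \<le> 1/C*(1/C)" and n2: "0 \<le> p ^ \<alpha> * q ^ \<alpha>" using C0 p0 by auto
      show ?thesis unfolding L f1 f2 by (simp only: em[OF n1] em[OF n2])
    qed
    also have "\<dots> = ennreal (1/C * (1/C) * (C * p ^ \<alpha> * (1 - p) ^ (n - \<alpha>)) + p ^ \<alpha> * q ^ \<alpha> * (1 - p) ^ n)"
      using C0 p0 by (intro ennreal_plus[symmetric]) auto
    also have "1/C * (1/C) * (C * p ^ \<alpha> * (1 - p) ^ (n - \<alpha>)) + p ^ \<alpha> * q ^ \<alpha> * (1 - p) ^ n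
        = p ^ \<alpha> * (1 - p) ^ (n - \<alpha>) / C + p ^ (2 * \<alpha>) * (1 - p) ^ n"
    proof -
      have "1/C * (1/C) * (C * p ^ \<alpha> * (1 - p) ^ (n - \<alpha>)) = p ^ \<alpha> * (1 - p) ^ (n - \<alpha>) / C"
        using C0 by (simp add: field_simps)
      moreover have "p ^ \<alpha> * q ^ \<alpha> = p ^ (2 * \<alpha>)"
        using True by (simp add: p_def q_def mult_2 power_add)
      ultimately show ?thesis by simp
    qed
    also have "\<dots> \<le> kr \<alpha> n P x y"
      using True p0 by (simp add: kr_def p_def C_def)
    finally have "(\<integral>\<^sup>+xs. (ennreal (1/C) * Ieq \<alpha> n xs x) * (ennreal (1/C) * Ieq \<alpha> n xs y)
            + (ennreal (pmf P x ^ \<alpha>) * I0 n xs x) * (ennreal (pmf P y ^ \<alpha>) * I0 n xs y) \<partial>M)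
        \<le> ennreal (kr \<alpha> n P x y)" by (blast intro: ennreal_leI)
    then show ?thesis by (rule order_trans) (intro add_increasing; simp)
  next
    case False
    define r where "r = measure_pmf.prob P (-{x} \<inter> -{y})"
    have rr: "r = 1 - p - q" using False by (simp add: r_def prob_two p_def q_def)
    have r0: "0 \<le> r" by (simp add: r_def)
    have ryx: "measure_pmf.prob P (-{y} \<inter> -{x}) = r" by (simp add: r_def Int_commute)
    define m where "m = n - 2 * \<alpha>"
    have nm: "n = m + 2 * \<alpha>" "n - \<alpha> = m + \<alpha>" using assms by (auto simp: m_def)
    have "(\<integral>\<^sup>+xs. Ieq \<alpha> n xs x * Ieq \<alpha> n xs y \<partial>M) \<le> ennreal (C ^ 2 * (p ^ \<alpha> * q ^ \<alpha> * r ^ m))"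
      using E_Ieq_Ieq[OF False assms(2), of P] by (simp add: M_def C_def p_def q_def r_def m_def)
    moreover have "(\<integral>\<^sup>+xs. I0 n xs x * I0 n xs y \<partial>M) = ennreal (r ^ n)"
      by (simp add: M_def E_I0_I0 r_def)
    ultimately have "(\<integral>\<^sup>+xs. (ennreal (1/C) * Ieq \<alpha> n xs x) * (ennreal (1/C) * Ieq \<alpha> n xs y)
            + (ennreal (pmf P x ^ \<alpha>) * I0 n xs x) * (ennreal (pmf P y ^ \<alpha>) * I0 n xs y) \<partial>M)
        \<le> ennreal (1/C * (1/C)) * ennreal (C ^ 2 * (p ^ \<alpha> * q ^ \<alpha> * r ^ m)) + ennreal (p ^ \<alpha> * q ^ \<alpha>) * ennreal (r ^ n)"
      unfolding L by (intro add_mono mult_left_mono) auto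
    also have "\<dots> = ennreal (1/C * (1/C) * (C ^ 2 * (p ^ \<alpha> * q ^ \<alpha> * r ^ m))) + ennreal (p ^ \<alpha> * q ^ \<alpha> * r ^ n)"
    proof -
      have n1: "0 \<le> 1/C*(1/C)" and n2: "0 \<le> p ^ \<alpha> * q ^ \<alpha>" using C0 p0 by auto
      show ?thesis by (simp only: em[OF n1] em[OF n2])
    qed
    also have "\<dots> = ennreal (1/C * (1/C) * (C ^ 2 * (p ^ \<alpha> * q ^ \<alpha> * r ^ m)) + p ^ \<alpha> * q ^ \<alpha> * r ^ n)"
      using C0 p0 r0 by (intro ennreal_plus[symmetric]) auto
    also have "1/C * (1/C) * (C ^ 2 * (p ^ \<alpha> * q ^ \<alpha> * r ^ m)) = p ^ \<alpha> * q ^ \<alpha> * r ^ m"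
      using C0 by (simp add: field_simps power2_eq_square)
    also have "p ^ \<alpha> * q ^ \<alpha> * r ^ m + p ^ \<alpha> * q ^ \<alpha> * r ^ n
       = p ^ \<alpha> * q ^ \<alpha> * (1 - p - q) ^ m + p ^ \<alpha> * q ^ \<alpha> * (1 - p - q) ^ (m + 2 * \<alpha>)"
      by (simp only: rr nm(1))
    also have "\<dots> \<le> ennreal (2 * (p ^ \<alpha> * q ^ \<alpha> * (1 - p - q) ^ (m + \<alpha>))
        + \<alpha>\<^sup>2 * p ^ \<alpha> * q ^ \<alpha> * (p + q)\<^sup>2 * (1 - p) ^ m * (1 - q) ^ m)"
      using r0 p0 by (intro ennreal_leI key_ineq) (auto simp: rr)
    also have "\<dots> = ennreal (2 * (p ^ \<alpha> * q ^ \<alpha> * r ^ (n - \<alpha>))) + ennreal (kr \<alpha> n P x y)"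
    proof -
      have k1: "kr \<alpha> n P x y = \<alpha>\<^sup>2 * p ^ \<alpha> * q ^ \<alpha> * (p + q)\<^sup>2 * (1 - p) ^ m * (1 - q) ^ m"
        using False by (simp add: kr_def m_def p_def q_def)
      have k2: "r ^ (n - \<alpha>) = (1 - p - q) ^ (m + \<alpha>)" by (simp only: rr nm(2))
      have a: "0 \<le> 2 * (p ^ \<alpha> * q ^ \<alpha> * (1 - p - q) ^ (m + \<alpha>))"
        using p0 r0 by (simp add: rr[symmetric])
      have b: "0 \<le> \<alpha>\<^sup>2 * p ^ \<alpha> * q ^ \<alpha> * (p + q)\<^sup>2 * (1 - p) ^ m * (1 - q) ^ m"
        using p0 by (intro mult_nonneg_nonneg) auto
      show ?thesis unfolding k1 k2 of_nat_power by (rule ennreal_plus[OF a b[unfolded of_nat_power]])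
    qed
    also have "ennreal (2 * (p ^ \<alpha> * q ^ \<alpha> * r ^ (n - \<alpha>)))
       = ennreal (1/C * q ^ \<alpha>) * (\<integral>\<^sup>+xs. Ieq \<alpha> n xs x * I0 n xs y \<partial>M)
        + ennreal (1/C * p ^ \<alpha>) * (\<integral>\<^sup>+xs. Ieq \<alpha> n xs y * I0 n xs x \<partial>M)"
    proof -
      have f1: "(\<integral>\<^sup>+xs. Ieq \<alpha> n xs x * I0 n xs y \<partial>M) = ennreal (C * p ^ \<alpha> * r ^ (n - \<alpha>))"
        using E_Ieq_I0[OF False] by (simp add: M_def C_def p_def r_def)
      have f2: "(\<integral>\<^sup>+xs. Ieq \<alpha> n xs y * I0 n xs x \<partial>M) = ennreal (C * q ^ \<alpha> * r ^ (n - \<alpha>))"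
        using E_Ieq_I0[of y x] False ryx by (simp add: M_def C_def q_def)
      have "ennreal (1/C * q ^ \<alpha>) * (\<integral>\<^sup>+xs. Ieq \<alpha> n xs x * I0 n xs y \<partial>M)
        + ennreal (1/C * p ^ \<alpha>) * (\<integral>\<^sup>+xs. Ieq \<alpha> n xs y * I0 n xs x \<partial>M)
        = ennreal (1/C * q ^ \<alpha> * (C * p ^ \<alpha> * r ^ (n - \<alpha>))) + ennreal (1/C * p ^ \<alpha> * (C * q ^ \<alpha> * r ^ (n - \<alpha>)))"
      proof -
        have n1: "0 \<le> 1/C * q ^ \<alpha>" and n2: "0 \<le> 1/C * p ^ \<alpha>" using C0 p0 by auto
        show ?thesis unfolding f1 f2 by (simp only: em[OF n1] em[OF n2])
      qed
      also have "\<dots> = ennreal (1/C * q ^ \<alpha> * (C * p ^ \<alpha> * r ^ (n - \<alpha>)) + 1/C * p ^ \<alpha> * (C * q ^ \<alpha> * r ^ (n - \<alpha>)))"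
        using C0 p0 r0 by (intro ennreal_plus[symmetric]) auto
      also have "1/C * q ^ \<alpha> * (C * p ^ \<alpha> * r ^ (n - \<alpha>)) + 1/C * p ^ \<alpha> * (C * q ^ \<alpha> * r ^ (n - \<alpha>))
          = 2 * (p ^ \<alpha> * q ^ \<alpha> * r ^ (n - \<alpha>))"
        using C0 by (simp add: field_simps)
      finally show ?thesis by simp
    qed
    finally show ?thesis unfolding R .
  qed
qed




lemma occ_subset:
  assumes "\<alpha> \<ge> 1"
  shows "{x. occ n xs x = \<alpha>} \<subseteq> xs ` {..<n}"
proof
  fix x assume "x \<in> {x. occ n xs x = \<alpha>}"
  then have "card {i \<in> {..<n}. xs i = x} \<noteq> 0" using assms by (simp add: occ_def)
  then have "{i \<in> {..<n}. xs i = x} \<noteq> {}" by (metis card.empty)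
  then show "x \<in> xs ` {..<n}" by auto
qed

lemma finite_occ: "\<alpha> \<ge> 1 \<Longrightarrow> finite {x. occ n xs x = \<alpha>}"
  by (rule finite_subset[OF occ_subset]) auto

lemma card_occ_le: "\<alpha> \<ge> 1 \<Longrightarrow> card {x. occ n xs x = \<alpha>} \<le> n"
proof -
  assume a: "\<alpha> \<ge> 1"
  have "card {x. occ n xs x = \<alpha>} \<le> card (xs ` {..<n})"
    by (intro card_mono finite_imageI finite_lessThan occ_subset[OF a])
  also have "\<dots> \<le> n" using card_image_le[of "{..<n}" xs] by simp
  finally show ?thesis .
qed

lemma Ieq_int:
  assumes "\<alpha> \<ge> 1"
  shows "(\<integral>\<^sup>+x. Ieq \<alpha> n xs x \<partial>count_space UNIV) = of_nat (prevalence n xs \<alpha>)"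
proof -
  have "(\<integral>\<^sup>+x. Ieq \<alpha> n xs x \<partial>count_space UNIV) = (\<integral>\<^sup>+x. indicator {x. occ n xs x = \<alpha>} x \<partial>count_space UNIV)"
    by (intro nn_integral_cong) (simp add: Ieq_def indicator_def)
  also have "\<dots> = emeasure (count_space UNIV) {x. occ n xs x = \<alpha>}" by simp
  also have "\<dots> = of_nat (prevalence n xs \<alpha>)" unfolding prevalence_def
    by (rule emeasure_count_space_finite) (auto intro: finite_occ[OF assms])
  finally show ?thesis .
qed

lemma GT_ennreal:
  assumes "\<alpha> \<ge> 1"
  shows "ennreal (GT_est \<alpha> n xs) = ennreal (1 / real (n choose \<alpha>)) * (\<integral>\<^sup>+x. Ieq \<alpha> n xs x \<partial>count_space UNIV)"
proof -
  have "ennreal (1 / real (n choose \<alpha>)) * ennreal (real (prevalence n xs \<alpha>))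
      = ennreal (1 / real (n choose \<alpha>) * real (prevalence n xs \<alpha>))" by (simp add: em)
  then show ?thesis unfolding Ieq_int[OF assms] GT_est_def
    by (simp add: ennreal_of_nat_eq_real_of_nat)
qed

lemma GT_nonneg: "0 \<le> GT_est \<alpha> n xs" by (simp add: GT_est_def)

lemma GT_le: "\<alpha> \<ge> 1 \<Longrightarrow> GT_est \<alpha> n xs \<le> real n / real (n choose \<alpha>)"
  unfolding GT_est_def prevalence_def
  by (intro divide_right_mono) (use card_occ_le in auto)

lemma MM_ennreal:
  assumes "\<alpha> \<ge> 1"
  shows "ennreal (missing_mass \<alpha> n xs P) = (\<integral>\<^sup>+x. ennreal (pmf P x ^ \<alpha>) * I0 n xs x \<partial>count_space UNIV)"
proof -
  define f where "f x = pmf P x ^ \<alpha> * (if occ n xs x = 0 then 1 else 0)" for x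
  have fle: "norm (f x) \<le> pmf P x" for x
  proof -
    have "pmf P x ^ \<alpha> \<le> pmf P x ^ 1"
      using assms by (intro power_decreasing) (auto simp: pmf_le_1)
    then show ?thesis by (simp add: f_def)
  qed
  have sm: "Infinite_Set_Sum.abs_summable_on f UNIV"
    by (rule abs_summable_on_comparison_test'[OF pmf_abs_summable fle])
  have "missing_mass \<alpha> n xs P = infsum f UNIV" by (simp add: missing_mass_def f_def[abs_def])
  also have "\<dots> = infsetsum f UNIV" using infsetsum_infsum[OF sm] by simp
  finally have "ennreal (missing_mass \<alpha> n xs P) = nn_integral (count_space UNIV) (\<lambda>x. ennreal (f x))"
    using nn_integral_conv_infsetsum[OF sm] by (simp add: f_def)
  also have "\<dots> = (\<integral>\<^sup>+x. ennreal (pmf P x ^ \<alpha>) * I0 n xs x \<partial>count_space UNIV)"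
    by (intro nn_integral_cong) (simp add: f_def I0_def)
  finally show ?thesis .
qed

lemma MM_nonneg: "0 \<le> missing_mass \<alpha> n xs P"
  unfolding missing_mass_def by (intro infsum_nonneg) auto

lemma MM_le1:
  assumes "\<alpha> \<ge> 1"
  shows "missing_mass \<alpha> n xs P \<le> 1"
proof -
  have "(\<integral>\<^sup>+x. ennreal (pmf P x ^ \<alpha>) * I0 n xs x \<partial>count_space UNIV) \<le> (\<integral>\<^sup>+x. ennreal (pmf P x) \<partial>count_space UNIV)"
  proof (intro nn_integral_mono)
    fix x
    have "pmf P x ^ \<alpha> \<le> pmf P x ^ 1"
      using assms by (intro power_decreasing) (auto simp: pmf_le_1)
    then show "ennreal (pmf P x ^ \<alpha>) * I0 n xs x \<le> ennreal (pmf P x)"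
      by (auto simp: I0_def)
  qed
  also have "\<dots> = 1" by (simp add: nn_integral_pmf measure_pmf.emeasure_space_1[simplified])
  finally show ?thesis by (simp add: MM_ennreal[OF assms, symmetric])
qed

lemma sq_identity:
  fixes a b :: real
  assumes "0 \<le> a" "0 \<le> b"
  shows "ennreal ((a - b)\<^sup>2) + (ennreal a * ennreal b + ennreal b * ennreal a)
       = ennreal a * ennreal a + ennreal b * ennreal b"
proof -
  have n1: "0 \<le> a*b" "0 \<le> b*a" "0 \<le> (a-b)\<^sup>2" "0 \<le> a*a" "0 \<le> b*b" "0 \<le> a*b+b*a" using assms by auto
  have "ennreal ((a - b)\<^sup>2) + (ennreal a * ennreal b + ennreal b * ennreal a)
      = ennreal ((a - b)\<^sup>2) + (ennreal (a*b) + ennreal (b*a))"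
    using assms by (simp only: em)
  also have "\<dots> = ennreal ((a - b)\<^sup>2) + ennreal (a*b + b*a)"
    using ennreal_plus[OF n1(1,2)] by simp
  also have "\<dots> = ennreal ((a - b)\<^sup>2 + (a*b + b*a))"
    using ennreal_plus[OF n1(3,6)] by simp
  also have "(a - b)\<^sup>2 + (a * b + b * a) = a * a + b * b" by (simp add: power2_eq_square algebra_simps)
  also have "ennreal (a * a + b * b) = ennreal (a*a) + ennreal (b*b)"
    using ennreal_plus[OF n1(4,5)] by simp
  also have "\<dots> = ennreal a * ennreal a + ennreal b * ennreal b"
    using assms by (simp only: em)
  finally show ?thesis .
qed

lemma two_prod:
  "(\<integral>\<^sup>+x. \<integral>\<^sup>+y. f1 x * f2 y + h1 x * h2 y \<partial>count_space UNIV \<partial>count_space UNIV)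
   = (\<integral>\<^sup>+x. f1 x \<partial>count_space UNIV) * (\<integral>\<^sup>+y. f2 y \<partial>count_space UNIV)
     + (\<integral>\<^sup>+x. h1 x \<partial>count_space UNIV) * (\<integral>\<^sup>+y. h2 y \<partial>count_space UNIV)"
  by (simp add: nn_integral_add nn_integral_cmult nn_integral_multc)

lemma swap3:
  fixes g :: "'b::countable \<Rightarrow> 'b \<Rightarrow> 'c \<Rightarrow> ennreal"
  shows "(\<integral>\<^sup>+xs. \<integral>\<^sup>+x. \<integral>\<^sup>+y. g x y xs \<partial>count_space UNIV \<partial>count_space UNIV \<partial>measure_pmf Q)
       = (\<integral>\<^sup>+x. \<integral>\<^sup>+y. \<integral>\<^sup>+xs. g x y xs \<partial>measure_pmf Q \<partial>count_space UNIV \<partial>count_space UNIV)"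
proof -
  have "(\<integral>\<^sup>+xs. \<integral>\<^sup>+x. \<integral>\<^sup>+y. g x y xs \<partial>count_space UNIV \<partial>count_space UNIV \<partial>measure_pmf Q)
       = (\<integral>\<^sup>+x. \<integral>\<^sup>+xs. \<integral>\<^sup>+y. g x y xs \<partial>count_space UNIV \<partial>measure_pmf Q \<partial>count_space UNIV)"
    by (rule nn_integral_count_space_nn_integral) auto
  also have "\<dots> = (\<integral>\<^sup>+x. \<integral>\<^sup>+y. \<integral>\<^sup>+xs. g x y xs \<partial>measure_pmf Q \<partial>count_space UNIV \<partial>count_space UNIV)"
    by (intro nn_integral_cong nn_integral_count_space_nn_integral) auto
  finally show ?thesis .
qed




lemma risk_P:
  fixes P :: "'a::countable pmf"
  assumes a1: "\<alpha> \<ge> 1" and n4: "4 * \<alpha> \<le> n"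
  shows "(\<integral>\<^sup>+xs. ennreal ((GT_est \<alpha> n xs - missing_mass \<alpha> n xs P)\<^sup>2) \<partial>measure_pmf (sample_pmf P n))
      \<le> (\<integral>\<^sup>+x. \<integral>\<^sup>+y. ennreal (kr \<alpha> n P x y) \<partial>count_space UNIV \<partial>count_space UNIV)"
proof -
  define C where "C = real (n choose \<alpha>)"
  define c where "c = ennreal (1/C)"
  define M where "M = measure_pmf (sample_pmf P n)"
  define F1 :: "(nat \<Rightarrow> 'a) \<Rightarrow> 'a \<Rightarrow> ennreal" where "F1 xs x = c * Ieq \<alpha> n xs x" for xs x
  define H :: "(nat \<Rightarrow> 'a) \<Rightarrow> 'a \<Rightarrow> ennreal" where "H xs x = ennreal (pmf P x ^ \<alpha>) * I0 n xs x" for xs x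
  define g1 where "g1 x y xs = F1 xs x * F1 xs y + H xs x * H xs y" for x y xs
  define g2 where "g2 x y xs = F1 xs x * H xs y + H xs x * F1 xs y" for x y xs
  define D where "D xs = ennreal ((GT_est \<alpha> n xs - missing_mass \<alpha> n xs P)\<^sup>2)" for xs
  define K where "K = (\<integral>\<^sup>+x. \<integral>\<^sup>+y. ennreal (kr \<alpha> n P x y) \<partial>count_space UNIV \<partial>count_space UNIV)"
  have C0: "C > 0" using n4 by (simp add: C_def)
  have A: "ennreal (GT_est \<alpha> n xs) = (\<integral>\<^sup>+x. F1 xs x \<partial>count_space UNIV)" for xs
    using GT_ennreal[OF a1] by (simp add: F1_def c_def C_def nn_integral_cmult)
  have B: "ennreal (missing_mass \<alpha> n xs P) = (\<integral>\<^sup>+x. H xs x \<partial>count_space UNIV)" for xs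
    using MM_ennreal[OF a1] by (simp add: H_def)
  have i2: "(\<integral>\<^sup>+x. \<integral>\<^sup>+y. g2 x y xs \<partial>count_space UNIV \<partial>count_space UNIV)
      = ennreal (GT_est \<alpha> n xs) * ennreal (missing_mass \<alpha> n xs P) + ennreal (missing_mass \<alpha> n xs P) * ennreal (GT_est \<alpha> n xs)" for xs
    unfolding g2_def two_prod A B ..
  have i1: "(\<integral>\<^sup>+x. \<integral>\<^sup>+y. g1 x y xs \<partial>count_space UNIV \<partial>count_space UNIV)
      = ennreal (GT_est \<alpha> n xs) * ennreal (GT_est \<alpha> n xs) + ennreal (missing_mass \<alpha> n xs P) * ennreal (missing_mass \<alpha> n xs P)" for xs
    unfolding g1_def two_prod A B ..
  have pw: "D xs + (\<integral>\<^sup>+x. \<integral>\<^sup>+y. g2 x y xs \<partial>count_space UNIV \<partial>count_space UNIV)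
      = (\<integral>\<^sup>+x. \<integral>\<^sup>+y. g1 x y xs \<partial>count_space UNIV \<partial>count_space UNIV)" for xs
    unfolding i1 i2 D_def by (rule sq_identity[OF GT_nonneg MM_nonneg])
  have int: "(\<integral>\<^sup>+xs. D xs \<partial>M) + (\<integral>\<^sup>+xs. \<integral>\<^sup>+x. \<integral>\<^sup>+y. g2 x y xs \<partial>count_space UNIV \<partial>count_space UNIV \<partial>M)
      = (\<integral>\<^sup>+xs. \<integral>\<^sup>+x. \<integral>\<^sup>+y. g1 x y xs \<partial>count_space UNIV \<partial>count_space UNIV \<partial>M)"
    by (simp add: nn_integral_add[symmetric] pw M_def)
  have pair: "(\<integral>\<^sup>+xs. g1 x y xs \<partial>M) \<le> (\<integral>\<^sup>+xs. g2 x y xs \<partial>M) + ennreal (kr \<alpha> n P x y)" for x y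
    using pairwise[OF a1, of n P x y] n4
    by (simp add: g1_def g2_def F1_def H_def c_def C_def M_def)
  have "(\<integral>\<^sup>+xs. \<integral>\<^sup>+x. \<integral>\<^sup>+y. g1 x y xs \<partial>count_space UNIV \<partial>count_space UNIV \<partial>M)
      = (\<integral>\<^sup>+x. \<integral>\<^sup>+y. \<integral>\<^sup>+xs. g1 x y xs \<partial>M \<partial>count_space UNIV \<partial>count_space UNIV)"
    unfolding M_def by (rule swap3)
  also have "\<dots> \<le> (\<integral>\<^sup>+x. \<integral>\<^sup>+y. (\<integral>\<^sup>+xs. g2 x y xs \<partial>M) + ennreal (kr \<alpha> n P x y) \<partial>count_space UNIV \<partial>count_space UNIV)"
    by (intro nn_integral_mono pair)
  also have "\<dots> = (\<integral>\<^sup>+x. \<integral>\<^sup>+y. \<integral>\<^sup>+xs. g2 x y xs \<partial>M \<partial>count_space UNIV \<partial>count_space UNIV) + K"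
    by (simp add: nn_integral_add K_def)
  also have "(\<integral>\<^sup>+x. \<integral>\<^sup>+y. \<integral>\<^sup>+xs. g2 x y xs \<partial>M \<partial>count_space UNIV \<partial>count_space UNIV)
      = (\<integral>\<^sup>+xs. \<integral>\<^sup>+x. \<integral>\<^sup>+y. g2 x y xs \<partial>count_space UNIV \<partial>count_space UNIV \<partial>M)"
    unfolding M_def by (rule swap3[symmetric])
  finally have main: "(\<integral>\<^sup>+xs. D xs \<partial>M) + (\<integral>\<^sup>+xs. \<integral>\<^sup>+x. \<integral>\<^sup>+y. g2 x y xs \<partial>count_space UNIV \<partial>count_space UNIV \<partial>M)
      \<le> (\<integral>\<^sup>+xs. \<integral>\<^sup>+x. \<integral>\<^sup>+y. g2 x y xs \<partial>count_space UNIV \<partial>count_space UNIV \<partial>M) + K"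
    unfolding int .
  have bnd: "(\<integral>\<^sup>+x. \<integral>\<^sup>+y. g2 x y xs \<partial>count_space UNIV \<partial>count_space UNIV) \<le> ennreal (2 * (real n / C))" for xs
  proof -
    have g: "GT_est \<alpha> n xs \<le> real n / C" using GT_le[OF a1] by (simp add: C_def)
    have m: "missing_mass \<alpha> n xs P \<le> 1" by (rule MM_le1[OF a1])
    have "GT_est \<alpha> n xs * missing_mass \<alpha> n xs P + missing_mass \<alpha> n xs P * GT_est \<alpha> n xs
        \<le> real n / C * 1 + 1 * (real n / C)"
      using g m GT_nonneg MM_nonneg C0 by (intro add_mono mult_mono) auto
    then have "ennreal (GT_est \<alpha> n xs * missing_mass \<alpha> n xs P + missing_mass \<alpha> n xs P * GT_est \<alpha> n xs)
        \<le> ennreal (2 * (real n / C))" by (intro ennreal_leI) simp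
    moreover have "ennreal (GT_est \<alpha> n xs * missing_mass \<alpha> n xs P + missing_mass \<alpha> n xs P * GT_est \<alpha> n xs)
       = ennreal (GT_est \<alpha> n xs) * ennreal (missing_mass \<alpha> n xs P) + ennreal (missing_mass \<alpha> n xs P) * ennreal (GT_est \<alpha> n xs)"
    proof -
      have a: "0 \<le> GT_est \<alpha> n xs" and b: "0 \<le> missing_mass \<alpha> n xs P" by (rule GT_nonneg, rule MM_nonneg)
      have "ennreal (GT_est \<alpha> n xs * missing_mass \<alpha> n xs P + missing_mass \<alpha> n xs P * GT_est \<alpha> n xs)
        = ennreal (GT_est \<alpha> n xs * missing_mass \<alpha> n xs P) + ennreal (missing_mass \<alpha> n xs P * GT_est \<alpha> n xs)"
        using a b by (intro ennreal_plus) auto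
      also have "\<dots> = ennreal (GT_est \<alpha> n xs) * ennreal (missing_mass \<alpha> n xs P) + ennreal (missing_mass \<alpha> n xs P) * ennreal (GT_est \<alpha> n xs)"
        using a b by (simp only: em)
      finally show ?thesis .
    qed
    ultimately show ?thesis unfolding i2 by simp
  qed
  have fin: "(\<integral>\<^sup>+xs. \<integral>\<^sup>+x. \<integral>\<^sup>+y. g2 x y xs \<partial>count_space UNIV \<partial>count_space UNIV \<partial>M) \<noteq> \<infinity>"
  proof -
    have "(\<integral>\<^sup>+xs. \<integral>\<^sup>+x. \<integral>\<^sup>+y. g2 x y xs \<partial>count_space UNIV \<partial>count_space UNIV \<partial>M)
        \<le> (\<integral>\<^sup>+xs. ennreal (2 * (real n / C)) \<partial>M)"
      by (intro nn_integral_mono bnd)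
    also have "\<dots> = ennreal (2 * (real n / C))" by (simp add: M_def measure_pmf.emeasure_space_1[simplified])
    finally show ?thesis by (auto simp: top_unique)
  qed
  have "(\<integral>\<^sup>+xs. \<integral>\<^sup>+x. \<integral>\<^sup>+y. g2 x y xs \<partial>count_space UNIV \<partial>count_space UNIV \<partial>M) + (\<integral>\<^sup>+xs. D xs \<partial>M)
     \<le> (\<integral>\<^sup>+xs. \<integral>\<^sup>+x. \<integral>\<^sup>+y. g2 x y xs \<partial>count_space UNIV \<partial>count_space UNIV \<partial>M) + K"
    using main by (subst add.commute)
  then have "(\<integral>\<^sup>+xs. D xs \<partial>M) \<le> K"
    using fin unfolding ennreal_add_left_cancel_le by blast
  then show ?thesis by (simp add: D_def M_def K_def)
qed




lemma off_bound:
  fixes p q B1 B3 :: real and k m :: nat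
  assumes p: "0 \<le> p" "p \<le> 1" and q: "0 \<le> q" "q \<le> 1"
  assumes h1p: "p ^ k * (1 - p) ^ m \<le> B1" and h1q: "q ^ k * (1 - q) ^ m \<le> B1"
  assumes h3p: "p ^ (k + 2) * (1 - p) ^ m \<le> B3" and h3q: "q ^ (k + 2) * (1 - q) ^ m \<le> B3"
  shows "real (Suc k) ^ 2 * p ^ Suc k * q ^ Suc k * (p + q)\<^sup>2 * (1 - p) ^ m * (1 - q) ^ m
     \<le> 4 * real (Suc k) ^ 2 * B3 * B1 * p * q"
proof -
  define a1 where "a1 = p ^ k * (1 - p) ^ m"
  define b1 where "b1 = q ^ k * (1 - q) ^ m"
  define a3 where "a3 = p ^ (k + 2) * (1 - p) ^ m"
  define b3 where "b3 = q ^ (k + 2) * (1 - q) ^ m"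
  have a10: "0 \<le> a1" "0 \<le> b1" "0 \<le> a3" "0 \<le> b3" using p q by (auto simp: a1_def b1_def a3_def b3_def)
  have id: "real (Suc k) ^ 2 * p ^ Suc k * q ^ Suc k * (p + q)\<^sup>2 * (1 - p) ^ m * (1 - q) ^ m
      = real (Suc k) ^ 2 * (p * q) * (a1 * b1 * (p + q)\<^sup>2)"
    by (simp add: a1_def b1_def mult_ac)
  have a3e: "a3 = a1 * p\<^sup>2" and b3e: "b3 = b1 * q\<^sup>2"
    by (simp_all add: a1_def b1_def a3_def b3_def power_add power2_eq_square mult_ac)
  have "(p + q)\<^sup>2 = 2 * p\<^sup>2 + 2 * q\<^sup>2 - (p - q)\<^sup>2" by (simp add: power2_eq_square algebra_simps)
  then have "(p + q)\<^sup>2 \<le> 2 * p\<^sup>2 + 2 * q\<^sup>2" using zero_le_power2[of "p - q"] by linarith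
  then have "a1 * b1 * (p + q)\<^sup>2 \<le> a1 * b1 * (2 * p\<^sup>2 + 2 * q\<^sup>2)"
    using a10 by (intro mult_left_mono) auto
  also have "\<dots> = 2 * (a3 * b1 + a1 * b3)" by (simp add: a3e b3e algebra_simps)
  also have "\<dots> \<le> 2 * (B3 * B1 + B1 * B3)"
    using a10 h1p h1q h3p h3q by (intro mult_left_mono add_mono mult_mono) (auto simp: a1_def b1_def a3_def b3_def)
  finally have "a1 * b1 * (p + q)\<^sup>2 \<le> 4 * (B3 * B1)" by (simp add: mult.commute)
  then have "real (Suc k) ^ 2 * (p * q) * (a1 * b1 * (p + q)\<^sup>2) \<le> real (Suc k) ^ 2 * (p * q) * (4 * (B3 * B1))"
    using p q by (intro mult_left_mono) auto
  then show ?thesis unfolding id by (simp add: mult_ac)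
qed




lemma pmf_int1: "(\<integral>\<^sup>+y. ennreal (pmf P y) \<partial>count_space UNIV) = 1"
  by (simp add: nn_integral_pmf measure_pmf.emeasure_space_1[simplified])

lemma kr_point:
  fixes P :: "'a pmf"
  assumes a1: "\<alpha> \<ge> 1" and n4: "4 * \<alpha> \<le> n"
  defines "B1 \<equiv> (2 * real (\<alpha> - 1)) ^ (\<alpha> - 1) / real n ^ (\<alpha> - 1)"
    and "B2 \<equiv> (2 * real (2 * \<alpha> - 1)) ^ (2 * \<alpha> - 1) / real n ^ (2 * \<alpha> - 1)"
    and "B3 \<equiv> (2 * real (\<alpha> + 1)) ^ (\<alpha> + 1) / real n ^ (\<alpha> + 1)"
    and "C \<equiv> real (n choose \<alpha>)"
  shows "kr \<alpha> n P x y \<le> (B1 / C + B2) * pmf P x * (if x = y then 1 else 0)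
           + 4 * real \<alpha> ^ 2 * B3 * B1 * pmf P x * pmf P y"
proof -
  obtain k where k: "\<alpha> = Suc k" using a1 by (cases \<alpha>) auto
  have n0: "n > 0" using n4 a1 by auto
  have C0: "C > 0" using n4 by (simp add: C_def)
  have hb1: "t ^ (\<alpha> - 1) * (1 - t) ^ (n - 2 * \<alpha>) \<le> B1" if "0 \<le> t" "t \<le> 1" for t
    unfolding B1_def by (rule pow_exp_bound2) (use that n0 n4 in auto)
  have hb3: "t ^ (\<alpha> + 1) * (1 - t) ^ (n - 2 * \<alpha>) \<le> B3" if "0 \<le> t" "t \<le> 1" for t
    unfolding B3_def by (rule pow_exp_bound2) (use that n0 n4 in auto)
  have hd1: "t ^ (\<alpha> - 1) * (1 - t) ^ (n - \<alpha>) \<le> B1" if "0 \<le> t" "t \<le> 1" for t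
    unfolding B1_def by (rule pow_exp_bound2) (use that n0 n4 in auto)
  have hd2: "t ^ (2 * \<alpha> - 1) * (1 - t) ^ n \<le> B2" if "0 \<le> t" "t \<le> 1" for t
    unfolding B2_def by (rule pow_exp_bound2) (use that n0 n4 in auto)
  define p where "p = pmf P x"
  define q where "q = pmf P y"
  have p: "0 \<le> p" "p \<le> 1" and q: "0 \<le> q" "q \<le> 1" by (auto simp: p_def q_def pmf_le_1)
  define m where "m = n - 2 * \<alpha>"
  have off: "real \<alpha> ^ 2 * p ^ \<alpha> * q ^ \<alpha> * (p + q)\<^sup>2 * (1 - p) ^ m * (1 - q) ^ m
      \<le> 4 * real \<alpha> ^ 2 * B3 * B1 * p * q"
  proof -
    have "p ^ k * (1 - p) ^ m \<le> B1" using hb1[OF p] by (simp add: k m_def)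
    moreover have "q ^ k * (1 - q) ^ m \<le> B1" using hb1[OF q] by (simp add: k m_def)
    moreover have "p ^ (k + 2) * (1 - p) ^ m \<le> B3" using hb3[OF p] by (simp add: k m_def)
    moreover have "q ^ (k + 2) * (1 - q) ^ m \<le> B3" using hb3[OF q] by (simp add: k m_def)
    ultimately show ?thesis using off_bound[OF p q] unfolding k by blast
  qed
  have diag: "p ^ \<alpha> * (1 - p) ^ (n - \<alpha>) / C + p ^ (2 * \<alpha>) * (1 - p) ^ n \<le> (B1 / C + B2) * p"
  proof -
    have e1: "p ^ \<alpha> * (1 - p) ^ (n - \<alpha>) = p * (p ^ (\<alpha> - 1) * (1 - p) ^ (n - \<alpha>))" by (simp add: k)
    have e2: "p ^ (2 * \<alpha>) * (1 - p) ^ n = p * (p ^ (2 * \<alpha> - 1) * (1 - p) ^ n)" by (simp add: k)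
    have "p * (p ^ (\<alpha> - 1) * (1 - p) ^ (n - \<alpha>)) \<le> p * B1" using hd1[OF p] p by (intro mult_left_mono) auto
    then have i1: "p ^ \<alpha> * (1 - p) ^ (n - \<alpha>) / C \<le> p * B1 / C" unfolding e1 using C0 by (intro divide_right_mono) auto
    have i2: "p ^ (2 * \<alpha>) * (1 - p) ^ n \<le> p * B2" unfolding e2 using hd2[OF p] p by (intro mult_left_mono) auto
    have "p * B1 / C + p * B2 = (B1 / C + B2) * p" by (simp add: algebra_simps)
    then show ?thesis using i1 i2 by linarith
  qed
  show ?thesis
  proof (cases "x = y")
    case True
    have e: "kr \<alpha> n P x y = (p ^ \<alpha> * (1 - p) ^ (n - \<alpha>) / C + p ^ (2 * \<alpha>) * (1 - p) ^ n)
       + real \<alpha> ^ 2 * p ^ \<alpha> * q ^ \<alpha> * (p + q)\<^sup>2 * (1 - p) ^ m * (1 - q) ^ m"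
      using True by (simp add: kr_def p_def q_def m_def C_def)
    have r: "(B1 / C + B2) * pmf P x * (if x = y then 1 else 0) + 4 * real \<alpha> ^ 2 * B3 * B1 * pmf P x * pmf P y
        = (B1 / C + B2) * p + 4 * real \<alpha> ^ 2 * B3 * B1 * p * q"
      using True by (simp add: p_def q_def)
    show ?thesis unfolding e r using diag off by linarith
  next
    case False
    have e: "kr \<alpha> n P x y = real \<alpha> ^ 2 * p ^ \<alpha> * q ^ \<alpha> * (p + q)\<^sup>2 * (1 - p) ^ m * (1 - q) ^ m"
      using False by (simp add: kr_def p_def q_def m_def)
    have r: "(B1 / C + B2) * pmf P x * (if x = y then 1 else 0) + 4 * real \<alpha> ^ 2 * B3 * B1 * pmf P x * pmf P y
        = 4 * real \<alpha> ^ 2 * B3 * B1 * p * q"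
      using False by (simp add: p_def q_def)
    show ?thesis unfolding e r using off by linarith
  qed
qed




lemma kr_sum:
  fixes P :: "'a pmf"
  assumes a1: "\<alpha> \<ge> 1" and n4: "4 * \<alpha> \<le> n"
  defines "B1 \<equiv> (2 * real (\<alpha> - 1)) ^ (\<alpha> - 1) / real n ^ (\<alpha> - 1)"
    and "B2 \<equiv> (2 * real (2 * \<alpha> - 1)) ^ (2 * \<alpha> - 1) / real n ^ (2 * \<alpha> - 1)"
    and "B3 \<equiv> (2 * real (\<alpha> + 1)) ^ (\<alpha> + 1) / real n ^ (\<alpha> + 1)"
    and "C \<equiv> real (n choose \<alpha>)"
  shows "(\<integral>\<^sup>+x. \<integral>\<^sup>+y. ennreal (kr \<alpha> n P x y) \<partial>count_space UNIV \<partial>count_space UNIV)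
      \<le> ennreal (B1 / C + B2 + 4 * real \<alpha> ^ 2 * B3 * B1)"
proof -
  define D0 where "D0 = B1 / C + B2"
  define K4 where "K4 = 4 * real \<alpha> ^ 2 * B3 * B1"
  have C0: "C > 0" using n4 by (simp add: C_def)
  have D00: "0 \<le> D0" using C0 by (simp add: D0_def B1_def B2_def)
  have K40: "0 \<le> K4" by (simp add: K4_def B1_def B3_def)
  have pt: "ennreal (kr \<alpha> n P x y) \<le> ennreal (D0 * pmf P x) * indicator {x} y + ennreal (K4 * pmf P x) * ennreal (pmf P y)" for x y
  proof -
    have kp: "kr \<alpha> n P x y \<le> D0 * pmf P x * (if x = y then 1 else 0) + K4 * pmf P x * pmf P y"
      using kr_point[OF a1 n4, of P x y] by (simp add: D0_def K4_def B1_def B2_def B3_def C_def)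
    have n1: "0 \<le> D0 * pmf P x" "0 \<le> K4 * pmf P x" "0 \<le> K4 * pmf P x * pmf P y" using D00 K40 by auto
    show ?thesis
    proof (cases "x = y")
      case True
      have "ennreal (D0 * pmf P x) * indicator {x} y + ennreal (K4 * pmf P x) * ennreal (pmf P y)
          = ennreal (D0 * pmf P x) + ennreal (K4 * pmf P x * pmf P y)"
        using True n1 by (simp add: em)
      also have "\<dots> = ennreal (D0 * pmf P x + K4 * pmf P x * pmf P y)"
        using n1 by (intro ennreal_plus[symmetric]) auto
      finally show ?thesis using kp True by (simp add: ennreal_leI)
    next
      case False
      have "ennreal (D0 * pmf P x) * indicator {x} y + ennreal (K4 * pmf P x) * ennreal (pmf P y)
          = ennreal (K4 * pmf P x * pmf P y)"
        using False n1 by (simp add: em)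
      then show ?thesis using kp False by (simp add: ennreal_leI)
    qed
  qed
  have inner: "(\<integral>\<^sup>+y. ennreal (D0 * pmf P x) * indicator {x} y + ennreal (K4 * pmf P x) * ennreal (pmf P y) \<partial>count_space UNIV)
      = ennreal D0 * ennreal (pmf P x) + ennreal K4 * ennreal (pmf P x)" for x
  proof -
    have "(\<integral>\<^sup>+y. ennreal (D0 * pmf P x) * indicator {x} y + ennreal (K4 * pmf P x) * ennreal (pmf P y) \<partial>count_space UNIV)
       = ennreal (D0 * pmf P x) + ennreal (K4 * pmf P x)"
      by (simp add: nn_integral_add nn_integral_cmult pmf_int1)
    also have "\<dots> = ennreal D0 * ennreal (pmf P x) + ennreal K4 * ennreal (pmf P x)"
      using D00 K40 by (simp add: em)
    finally show ?thesis .
  qed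
  have "(\<integral>\<^sup>+x. \<integral>\<^sup>+y. ennreal (kr \<alpha> n P x y) \<partial>count_space UNIV \<partial>count_space UNIV)
     \<le> (\<integral>\<^sup>+x. \<integral>\<^sup>+y. ennreal (D0 * pmf P x) * indicator {x} y + ennreal (K4 * pmf P x) * ennreal (pmf P y) \<partial>count_space UNIV \<partial>count_space UNIV)"
    by (intro nn_integral_mono pt)
  also have "\<dots> = (\<integral>\<^sup>+x. ennreal D0 * ennreal (pmf P x) + ennreal K4 * ennreal (pmf P x) \<partial>count_space UNIV)"
    by (simp only: inner)
  also have "\<dots> = ennreal D0 + ennreal K4"
    by (simp add: nn_integral_add nn_integral_cmult pmf_int1)
  also have "\<dots> = ennreal (D0 + K4)" using D00 K40 by (simp add: ennreal_plus)
  finally show ?thesis by (simp add: D0_def K4_def)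
qed

lemma Kb_bound:
  assumes a1: "\<alpha> \<ge> 1" and n4: "4 * \<alpha> \<le> n"
  defines "c1 \<equiv> (2 * real (\<alpha> - 1)) ^ (\<alpha> - 1)"
    and "c2 \<equiv> (2 * real (2 * \<alpha> - 1)) ^ (2 * \<alpha> - 1)"
    and "c3 \<equiv> (2 * real (\<alpha> + 1)) ^ (\<alpha> + 1)"
  shows "c1 / real n ^ (\<alpha> - 1) / real (n choose \<alpha>) + c2 / real n ^ (2 * \<alpha> - 1)
          + 4 * real \<alpha> ^ 2 * (c3 / real n ^ (\<alpha> + 1)) * (c1 / real n ^ (\<alpha> - 1))
        \<le> (c1 * real \<alpha> ^ \<alpha> + c2 + 4 * real \<alpha> ^ 2 * c3 * c1) / real n ^ (2 * \<alpha> - 1)"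
proof -
  obtain k where k: "\<alpha> = Suc k" using a1 by (cases \<alpha>) auto
  define N where "N = real n"
  have N1: "N \<ge> 1" using n4 a1 by (simp add: N_def)
  have c0: "0 \<le> c1" "0 \<le> c2" "0 \<le> c3" by (simp_all add: c1_def c2_def c3_def)
  define C where "C = real (n choose \<alpha>)"
  have Cge: "(N / real \<alpha>) ^ \<alpha> \<le> C"
    unfolding N_def C_def by (rule binomial_ge_n_over_k_pow_k) (use n4 in auto)
  have pos: "0 < (N / real \<alpha>) ^ \<alpha>" using N1 a1 by simp
  have invC: "1 / C \<le> real \<alpha> ^ \<alpha> / N ^ \<alpha>"
  proof -
    have "1 / C \<le> 1 / (N / real \<alpha>) ^ \<alpha>" using Cge pos by (intro divide_left_mono) auto
    also have "\<dots> = real \<alpha> ^ \<alpha> / N ^ \<alpha>" by (simp add: power_divide)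
    finally show ?thesis .
  qed
  have pw1: "N ^ (\<alpha> - 1) * N ^ \<alpha> = N ^ (2 * \<alpha> - 1)" by (simp add: k power_add[symmetric] mult_2)
  have pw2: "N ^ (\<alpha> + 1) * N ^ (\<alpha> - 1) = N * N ^ (2 * \<alpha> - 1)" by (simp add: k power_add[symmetric] mult_2)
  have Npos: "0 < N ^ (2 * \<alpha> - 1)" "0 < N ^ (\<alpha> - 1)" using N1 by auto
  have t1: "c1 / N ^ (\<alpha> - 1) / C \<le> c1 * real \<alpha> ^ \<alpha> / N ^ (2 * \<alpha> - 1)"
  proof -
    have "c1 / N ^ (\<alpha> - 1) / C = c1 / N ^ (\<alpha> - 1) * (1 / C)" by simp
    also have "\<dots> \<le> c1 / N ^ (\<alpha> - 1) * (real \<alpha> ^ \<alpha> / N ^ \<alpha>)"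
      using invC c0 Npos by (intro mult_left_mono) auto
    also have "\<dots> = c1 * real \<alpha> ^ \<alpha> / (N ^ (\<alpha> - 1) * N ^ \<alpha>)" by simp
    finally show ?thesis unfolding pw1 .
  qed
  have t3: "4 * real \<alpha> ^ 2 * (c3 / N ^ (\<alpha> + 1)) * (c1 / N ^ (\<alpha> - 1)) \<le> 4 * real \<alpha> ^ 2 * c3 * c1 / N ^ (2 * \<alpha> - 1)"
  proof -
    have "4 * real \<alpha> ^ 2 * (c3 / N ^ (\<alpha> + 1)) * (c1 / N ^ (\<alpha> - 1)) = (4 * real \<alpha> ^ 2 * c3 * c1) / (N ^ (\<alpha> + 1) * N ^ (\<alpha> - 1))"
      by simp
    also have "\<dots> = (4 * real \<alpha> ^ 2 * c3 * c1) / (N * N ^ (2 * \<alpha> - 1))" unfolding pw2 ..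
    also have "\<dots> \<le> (4 * real \<alpha> ^ 2 * c3 * c1) / (N ^ (2 * \<alpha> - 1))"
      using N1 Npos c0 by (intro divide_left_mono) (auto intro!: mult_nonneg_nonneg)
    finally show ?thesis .
  qed
  show ?thesis using t1 t3 unfolding N_def[symmetric] C_def[symmetric]
    by (simp add: add_divide_distrib)
qed

theorem lemma2:
  fixes \<alpha> :: nat
  assumes "\<alpha> \<ge> 1"
  shows "\<exists>C::real. \<forall>\<^sub>F n in sequentially.
           GT_risk TYPE('a::countable) \<alpha> n \<le> ennreal (C / real n ^ (2 * \<alpha> - 1))"
proof -
  define c1 where "c1 = (2 * real (\<alpha> - 1)) ^ (\<alpha> - 1)"
  define c2 where "c2 = (2 * real (2 * \<alpha> - 1)) ^ (2 * \<alpha> - 1)"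
  define c3 where "c3 = (2 * real (\<alpha> + 1)) ^ (\<alpha> + 1)"
  define Cst where "Cst = c1 * real \<alpha> ^ \<alpha> + c2 + 4 * real \<alpha> ^ 2 * c3 * c1"
  have "\<forall>\<^sub>F n in sequentially. GT_risk TYPE('a::countable) \<alpha> n \<le> ennreal (Cst / real n ^ (2 * \<alpha> - 1))"
  proof (rule eventually_sequentiallyI[of "4 * \<alpha>"])
    fix n assume n4: "4 * \<alpha> \<le> n"
    show "GT_risk TYPE('a::countable) \<alpha> n \<le> ennreal (Cst / real n ^ (2 * \<alpha> - 1))"
      unfolding GT_risk_def
    proof (rule SUP_least)
      fix P :: "'a pmf"
      have "(\<integral>\<^sup>+xs. ennreal ((GT_est \<alpha> n xs - missing_mass \<alpha> n xs P)\<^sup>2) \<partial>measure_pmf (sample_pmf P n))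
          \<le> (\<integral>\<^sup>+x. \<integral>\<^sup>+y. ennreal (kr \<alpha> n P x y) \<partial>count_space UNIV \<partial>count_space UNIV)"
        by (rule risk_P[OF assms n4])
      also have "\<dots> \<le> ennreal (c1 / real n ^ (\<alpha> - 1) / real (n choose \<alpha>) + c2 / real n ^ (2 * \<alpha> - 1)
          + 4 * real \<alpha> ^ 2 * (c3 / real n ^ (\<alpha> + 1)) * (c1 / real n ^ (\<alpha> - 1)))"
        using kr_sum[OF assms n4, of P] by (simp add: c1_def c2_def c3_def)
      also have "\<dots> \<le> ennreal (Cst / real n ^ (2 * \<alpha> - 1))"
        unfolding Cst_def c1_def c2_def c3_def by (intro ennreal_leI Kb_bound assms n4)
      finally show "(\<integral>\<^sup>+xs. ennreal ((GT_est \<alpha> n xs - missing_mass \<alpha> n xs P)\<^sup>2) \<partial>measure_pmf (sample_pmf P n))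
          \<le> ennreal (Cst / real n ^ (2 * \<alpha> - 1))" .
    qed
  qed
  then show ?thesis by blast
qed


end
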